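(* The identities (A13) $(x\wedge y)\wedge z\approx (y\wedge z)\wedge x$, (J5') $x\approx (x'\wedge y)'\wedge(x'\wedge y')'$ form a 2-base for the variety $\mathbb{BA}$ of Boolean algebras (in the language $\langle\wedge,{}'\rangle$).
   Context: Algebras are of type $\langle \wedge, {}'\rangle$ with $\wedge$ binary and ${}'$ unary. The variety $\mathbb{BA}$ of Boolean algebras in this language consists of the algebras $\langle B,\wedge,{}'\rangle$ obtained from Boolean algebras by keeping only meet and complement (equivalently, the variety generated by the two-element Boolean algebra with meet and complement). A base for a variety is an independent set of identities (no identity in the set follows from the others) that defines the variety; an $n$-base is a base with exactly $n$ identities. *)

theory Defs
  imports Main
begin

datatype bterm = Var nat | Meet bterm bterm | Cpl bterm

type_synonym identity = "bterm \<times> bterm"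

fun subst :: "(nat \<Rightarrow> bterm) \<Rightarrow> bterm \<Rightarrow> bterm" where
  "subst \<sigma> (Var i) = \<sigma> i"
| "subst \<sigma> (Meet s t) = Meet (subst \<sigma> s) (subst \<sigma> t)"
| "subst \<sigma> (Cpl s) = Cpl (subst \<sigma> s)"

fun eval2 :: "(nat \<Rightarrow> bool) \<Rightarrow> bterm \<Rightarrow> bool" where
  "eval2 v (Var i) = v i"
| "eval2 v (Meet s t) = (eval2 v s \<and> eval2 v t)"
| "eval2 v (Cpl s) = (\<not> eval2 v s)"

text \<open>An identity holds in the variety BA iff it holds in the two-element
  Boolean algebra (BA is generated by it).\<close>
definition holds_in_BA :: "identity \<Rightarrow> bool" where
  "holds_in_BA e \<longleftrightarrow> (\<forall>v. eval2 v (fst e) = eval2 v (snd e))"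

inductive derivable :: "identity set \<Rightarrow> bterm \<Rightarrow> bterm \<Rightarrow> bool"
  for \<Sigma> :: "identity set" where
  ax: "(s, t) \<in> \<Sigma> \<Longrightarrow> derivable \<Sigma> (subst \<sigma> s) (subst \<sigma> t)"
| refl: "derivable \<Sigma> t t"
| sym: "derivable \<Sigma> s t \<Longrightarrow> derivable \<Sigma> t s"
| trans: "derivable \<Sigma> s t \<Longrightarrow> derivable \<Sigma> t u \<Longrightarrow> derivable \<Sigma> s u"
| cong_meet: "derivable \<Sigma> s1 t1 \<Longrightarrow> derivable \<Sigma> s2 t2 \<Longrightarrow>
     derivable \<Sigma> (Meet s1 s2) (Meet t1 t2)"
| cong_cpl: "derivable \<Sigma> s t \<Longrightarrow> derivable \<Sigma> (Cpl s) (Cpl t)"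

definition defines_BA :: "identity set \<Rightarrow> bool" where
  "defines_BA \<Sigma> \<longleftrightarrow> (\<forall>s t. derivable \<Sigma> s t \<longleftrightarrow> holds_in_BA (s, t))"

definition independent :: "identity set \<Rightarrow> bool" where
  "independent \<Sigma> \<longleftrightarrow> (\<forall>e\<in>\<Sigma>. \<not> derivable (\<Sigma> - {e}) (fst e) (snd e))"

definition is_n_base_BA :: "nat \<Rightarrow> identity set \<Rightarrow> bool" where
  "is_n_base_BA n \<Sigma> \<longleftrightarrow> finite \<Sigma> \<and> card \<Sigma> = n \<and> defines_BA \<Sigma> \<and> independent \<Sigma>"

abbreviation "vx \<equiv> Var 0"
abbreviation "vy \<equiv> Var 1"
abbreviation "vz \<equiv> Var 2"

definition A13 :: identity where
  "A13 = (Meet (Meet vx vy) vz, Meet (Meet vy vz) vx)"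

definition J5' :: identity where
  "J5' = (vx, Meet (Cpl (Meet (Cpl vx) vy)) (Cpl (Meet (Cpl vx) (Cpl vy))))"

end

theory Submission
  imports Defs
begin

primrec evm :: "('a \<Rightarrow> 'a \<Rightarrow> 'a) \<Rightarrow> ('a \<Rightarrow> 'a) \<Rightarrow> (nat \<Rightarrow> 'a) \<Rightarrow> bterm \<Rightarrow> 'a" where
  "evm m c v (Var i) = v i"
| "evm m c v (Meet s t) = m (evm m c v s) (evm m c v t)"
| "evm m c v (Cpl s) = c (evm m c v s)"

lemma evm_subst: "evm m c v (subst \<sigma> t) = evm m c (\<lambda>i. evm m c v (\<sigma> i)) t"
  by (induction t) auto

lemma derivable_sound:
  assumes "derivable \<Sigma> s t"
    and "\<And>l r w. (l, r) \<in> \<Sigma> \<Longrightarrow> evm m c w l = evm m c w r"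
  shows "evm m c v s = evm m c v t"
  using assms(1)
proof (induction arbitrary: v rule: derivable.induct)
  case (ax s t \<sigma>)
  then show ?case using assms(2) by (simp add: evm_subst)
qed auto

lemma eval2_evm: "eval2 v t = evm (\<and>) Not v t"
  by (induction t) auto

primrec vs :: "bterm \<Rightarrow> nat set" where
  "vs (Var i) = {i}"
| "vs (Meet s t) = vs s \<union> vs t"
| "vs (Cpl s) = vs s"

lemma finite_vs: "finite (vs t)"
  by (induction t) auto

lemma evm_cong: "(\<And>i. i \<in> vs t \<Longrightarrow> v i = w i) \<Longrightarrow> evm m c v t = evm m c w t"
  by (induction t) auto

locale hb =
  fixes m :: "'a \<Rightarrow> 'a \<Rightarrow> 'a" and c :: "'a \<Rightarrow> 'a"
  assumes A13: "m (m x y) z = m (m y z) x"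
    and J: "x = m (c (m (c x) y)) (c (m (c x) (c y)))"
begin

lemma comm: "(m x y) = (m y x)"
proof -
  have comm_5: "\<And>X1 X2 X3 X4. (m (m (m X1 X2) X3) X4) = (m (m X1 X4) (m X2 X3))" by (metis A13)
  have comm_6: "\<And>X1 X2 X3 X4. (m (m X1 (m X2 X3)) X4) = (m (m X2 X1) (m X3 X4))" by (metis A13 comm_5)
  have comm_7: "\<And>X1 X2 X3 X4. (m (m (m X1 X2) X3) X4) = (m (m X2 X4) (m X3 X1))" by (metis A13)
  have comm_8: "\<And>X1 X2 X3 X4 X5. (m (m (m (m X1 X2) X3) X4) X5) = (m (m X3 X1) (m X4 (m X2 X5)))" by (metis comm_5 comm_6)
  have comm_10: "\<And>X1 X2 X3 X4 X5. (m (m (m X1 X2) X3) (m X4 X5)) = (m (m X1 X2) (m X5 (m X4 X3)))" by (metis A13 comm_7 comm_8)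
  have comm_12: "\<And>X1 X2 X3 X4. (m (m X1 X2) (m X3 X4)) = (m X1 (m X4 (m X3 X2)))" by (metis J comm_10)
  have comm_13: "\<And>X1 X2 X3 X4. (m (m (m X1 X2) X3) X4) = (m X2 (m X1 (m X3 X4)))" by (metis comm_12 comm_7)
  have comm_14: "\<And>X1 X2 X3. (m (m X1 (c (m (c X2) X3))) (c (m (c X2) (c X3)))) = (m X2 X1)" by (metis A13 J)
  have comm_15: "\<And>X1 X2 X3. (m X1 (m X2 X3)) = (m X3 (m X2 X1))" by (metis J comm_13 comm_14)
  have comm_16: "\<And>X1 X2 X3 X4. (m (m X1 (m X2 X3)) X4) = (m X2 (m X4 (m X3 X1)))" by (metis comm_12 comm_6)
  have comm_17: "\<And>X1 X2 X3 X4. (m X1 (m X2 (m X3 X4))) = (m X2 (m X3 (m X1 X4)))" by (metis comm_12 comm_13 comm_5)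
  have comm_18: "\<And>X1 X2 X3 X4. (m X1 (m X2 (m X3 X4))) = (m X4 (m X1 (m X2 X3)))" by (metis A13 comm_13 comm_15 comm_16)
  have comm_19: "\<And>X1 X2 X3 X4. (m X1 (m X2 (m X3 X4))) = (m X4 (m X3 (m X1 X2)))" by (metis comm_15 comm_17)
  have comm_20: "\<And>X1 X2 X3 X4. (m X1 (m X2 (m X3 X4))) = (m X3 (m X4 (m X1 X2)))" by (metis comm_18)
  have comm_21: "\<And>X1 X2 X3 X4. (m X1 (m X2 (m X3 X4))) = (m X2 (m X1 (m X3 X4)))" by (metis comm_19 comm_20)
  have comm_23: "\<And>X1 X2 X3. (m X1 (m X2 X3)) = (m X2 (m X1 X3))" by (metis J comm_21)
  have comm_25: "\<And>X1 X2 X3 X4. (m (c (m (c X1) X2)) (m X3 (m X4 (c (m (c X1) (c X2)))))) = (m X3 (m X4 X1))" by (metis J comm_17)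
  have comm_26: "\<And>X1 X2 X3. (m (c (m (c X1) X2)) (m (c (m (c X1) (c X2))) X3)) = (m X3 X1)" by (metis J comm_15 comm_23)
  have comm_28: "\<And>X1 X2. (m X1 X2) = (m X2 X1)" by (metis comm_25 comm_26)
  show ?thesis by (metis comm_28)
qed

lemma assoc: "(m (m x y) z) = (m x (m y z))"
proof -
  have assoc_10: "\<And>X1 X2 X3. (m (m X1 X2) X3) = (m X1 (m X2 X3))" by (metis A13 comm)
  have assoc_12: "\<And>X1 X2 X3. (m X1 (m X2 X3)) = (m X2 (m X3 X1))" by (metis A13 assoc_10)
  show ?thesis by (metis assoc_12 comm)
qed

lemma cc: "(c (c x)) = x"
proof -
  have cc_10: "\<And>X1 X2 X3. (m X1 (m X2 X3)) = (m X2 (m X1 X3))" by (metis assoc comm)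
  have cc_11: "\<And>X1 X2 X3. (m (c (m (c X1) X2)) (m (c (m (c X1) (c X2))) X3)) = (m X1 X3)" by (metis J assoc)
  have cc_12: "\<And>X1 X2. (m (c (m (c X1) X2)) (c (m (c X2) (c X1)))) = X1" by (metis J comm)
  have cc_13: "\<And>X1 X2 X3. (m (c (m (c X1) X2)) (m X3 (c (m (c X1) (c X2))))) = (m X3 X1)" by (metis J cc_10)
  have cc_14: "\<And>X1 X2. (m X1 (c (m (c (c X2)) (c X1)))) = (m X1 (c (m (c X1) X2)))" by (metis cc_11 cc_12 comm)
  have cc_15: "\<And>X1 X2 X3. (m X1 (m X2 X3)) = (m X3 (m X1 X2))" by (metis assoc comm)
  have cc_16: "\<And>X1 X2. (m X1 (m (c (m (c X1) X2)) (c (m (c (c X2)) X1)))) = (m X1 (c X2))" by (metis cc_10 cc_13 cc_14 cc_15 comm)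
  have cc_17: "\<And>X1 X2. (m (c (m X1 (c X2))) (c (m (c X1) (c X2)))) = X2" by (metis cc_12 comm)
  have cc_19: "\<And>X1. (m (c X1) (c (c X1))) = (m X1 (c X1))" by (metis cc_16 cc_17 comm)
  have cc_21: "\<And>X1. (m (c (m X1 (c X1))) (c (m X1 (c (c X1))))) = (c X1)" by (metis cc_17 cc_19 comm)
  have cc_23: "\<And>X1. (c (c X1)) = X1" by (metis J cc_21)
  show ?thesis by (metis cc_23)
qed

lemma K: "(m x (c x)) = (m y (c y))"
proof -
  have K_13: "\<And>X1 X2 X3. (m X1 (m X2 X3)) = (m X3 (m X1 X2))" by (metis assoc comm)
  have K_14: "\<And>X1 X2. (m (c (m X1 X2)) (c (m X1 (c X2)))) = (c X1)" by (metis J cc)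
  have K_15: "\<And>X1 X2 X3. (m X1 (m X2 X3)) = (m X3 (m X2 X1))" by (metis K_13 comm)
  have K_16: "\<And>X1 X2. (m (c (m X1 X2)) (c (m (c X2) X1))) = (c X1)" by (metis K_14 comm)
  have K_18: "\<And>X1 X2 X3. (m (c (m X1 X2)) (m X3 (c (m X1 (c X2))))) = (m X3 (c X1))" by (metis K_13 K_14 K_15)
  have K_19: "\<And>X1 X2. (m (c (m X1 X2)) (c (m (c X1) X2))) = (c X2)" by (metis K_16 comm)
  have K_21: "\<And>X1 X2 X3. (m (c (m X1 X2)) (m X3 (c (m (c X2) X1)))) = (m X3 (c X1))" by (metis K_13 K_15 K_16)
  have K_22: "\<And>X1 X2. (m X1 (c (m (c X2) X1))) = (m X2 (c (m (c X1) X2)))" by (metis K_16 K_18 cc comm)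
  have K_23: "\<And>X1 X2 X3. (m (c (m X1 X2)) (m X3 (c (m (c X1) X2)))) = (m X3 (c X2))" by (metis K_13 K_15 K_19)
  have K_25: "\<And>X1 X2. (m X1 (c X1)) = (m X2 (c X2))" by (metis K_21 K_22 K_23)
  show ?thesis by (metis K_25)
qed

lemma idem: "(m x x) = x"
proof -
  have idem_15: "\<And>X1 X2. (m (c (m X1 X2)) (c (m X1 (c X2)))) = (c X1)" by (metis J cc)
  have idem_17: "\<And>X1 X2 X3. (m X1 (c X1)) = (m X2 (m X3 (c (m X2 X3))))" by (metis K assoc)
  have idem_18: "\<And>X1 X2. (m (c (m X1 X1)) (c (m X2 (c X2)))) = (c X1)" by (metis K idem_15)
  have idem_19: "\<And>X1 X2 X3. (m X1 (m X2 X3)) = (m X3 (m X1 X2))" by (metis assoc comm)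
  have idem_20: "\<And>X1 X2. (m X1 (c X1)) = (m X2 (m X2 (c X2)))" by (metis assoc idem_17 idem_18)
  have idem_21: "\<And>X1 X2 X3. (m X1 (m X2 X3)) = (m X3 (m X2 X1))" by (metis comm idem_19)
  have idem_22: "\<And>X1 X2 X3. (m X1 (c X1)) = (m X2 (m X3 (c X3)))" by (metis K idem_20)
  have idem_23: "\<And>X1 X2. (m X1 (c (m (c X2) (m X1 (c (m X1 X2)))))) = (m X1 X2)" by (metis cc idem_15 idem_21)
  have idem_24: "\<And>X1 X2 X3. (m X1 (c X1)) = (m X2 (m (c X2) X3))" by (metis assoc comm idem_22)
  have idem_26: "\<And>X1 X2. (m X1 (c (m X2 (c X2)))) = (m X1 X1)" by (metis cc idem_23 idem_24)
  have idem_28: "\<And>X1 X2. (m X1 X1) = (m (c (m X2 (c X2))) X1)" by (metis comm idem_26)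
  have idem_29: "\<And>X1 X2. (m (c (m X1 (c X1))) (c (m X2 X2))) = (c X2)" by (metis K cc idem_15)
  have idem_31: "\<And>X1. (m X1 X1) = X1" by (metis cc idem_23 idem_28 idem_29)
  show ?thesis by (metis idem_31)
qed

lemma zero: "(m x (m y (c y))) = (m y (c y))"
proof -
  have zero_11: "\<And>X1 X2. (m X1 (m X1 X2)) = (m X1 X2)" by (metis assoc idem)
  have zero_14: "\<And>X1 X2. (m X1 (m X2 (c X2))) = (m X2 (c X2))" by (metis K zero_11)
  show ?thesis by (metis zero_14)
qed

lemma unit: "(m x (c (m y (c y)))) = x"
proof -
  have unit_17: "\<And>X1 X2. (m X1 (m X1 X2)) = (m X1 X2)" by (metis assoc idem)
  have unit_21: "\<And>X1 X2. (m X1 (c (m (c X1) X2))) = X1" by (metis J comm unit_17)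
  show ?thesis by (metis K unit_21)
qed

lemma orth: "(m (m a p) (m (c a) q)) = (m b (c b))"
proof -
  have orth_16: "\<And>X1 X2. (m X1 (m X1 X2)) = (m X1 X2)" by (metis assoc idem)
  have orth_18: "\<And>X1 X2. (m X1 (m (c X1) X2)) = (m X1 (c X1))" by (metis assoc comm zero)
  have orth_19: "\<And>X1 X2. (m X1 (m X2 X1)) = (m X2 X1)" by (metis comm orth_16)
  have orth_21: "\<And>X1 X2. (m X1 (m X2 (c X1))) = (m X1 (c X1))" by (metis orth_18 orth_19)
  have orth_24: "\<And>X1 X2 X3. (m X1 (m X2 (m X3 (c X1)))) = (m X1 (c X1))" by (metis assoc orth_21)
  show ?thesis by (metis K assoc comm orth_24)
qed

lemma mcp: "(m a (c (m a p))) = (m a (c p))"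
proof -
  have mcp_12: "\<And>X1 X2. (m X1 (m X1 X2)) = (m X1 X2)" by (metis assoc idem)
  have mcp_15: "\<And>X1 X2. (m X1 (c (m (c X1) X2))) = X1" by (metis J comm mcp_12)
  have mcp_16: "\<And>X1 X2. (m X1 (m X2 X1)) = (m X2 X1)" by (metis comm mcp_12)
  have mcp_18: "\<And>X1 X2. (m X1 (c (m X2 (c X1)))) = X1" by (metis mcp_15 mcp_16)
  have mcp_20: "\<And>X1 X2. (m (c X1) (c (m X2 X1))) = (c X1)" by (metis cc mcp_18)
  have mcp_22: "\<And>X1 X2. (m (c X1) (c (m (c X1) (c X2)))) = (m (c X1) X2)" by (metis J assoc cc comm mcp_20)
  have mcp_24: "\<And>X1 X2. (m X1 (c (m X1 (c X2)))) = (m X1 X2)" by (metis cc mcp_22)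
  have mcp_26: "\<And>X1 X2. (m X1 (c (m X1 X2))) = (m X1 (c X2))" by (metis mcp_12 mcp_24)
  show ?thesis by (metis mcp_26)
qed

lemma svar: "x = (c (m (c (m a x)) (c (m (c a) x))))"
proof -
  have svar_14: "\<And>X1 X2. (m (c (m X1 X2)) (c (m X1 (c X2)))) = (c X1)" by (metis J cc)
  show ?thesis by (metis cc comm svar_14)
qed


definition bt where "bt = m undefined (c undefined)"

lemma bt_eq: "m x (c x) = bt"
  unfolding bt_def by (rule K)

lemma zero_bt: "m x bt = bt"
  unfolding bt_def by (rule zero)

lemma unit_tp: "m x (c bt) = x"
  unfolding bt_def by (rule unit)

lemma dup: "m a (m p r) = m (m a p) (m a r)"
  by (metis idem assoc comm)

lemma shanG:
  assumes "m a (w i) = m a u"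
  shows "m a (evm m c w t) = m a (evm m c (w(i:=u)) t)"
proof (induction t)
  case (Var j)
  then show ?case using assms by auto
next
  case (Meet t1 t2)
  then show ?case by (simp add: dup[of a])
next
  case (Cpl t)
  then show ?case by (metis evm.simps(3) mcp)
qed

lemma shan1: "m (w i) (evm m c w t) = m (w i) (evm m c (w(i:=c bt)) t)"
  by (rule shanG) (simp add: idem unit_tp)

lemma shan0: "m (c (w i)) (evm m c w t) = m (c (w i)) (evm m c (w(i:=bt)) t)"
  by (rule shanG) (metis bt_eq cc zero_bt)

lemma tv:
  assumes "\<forall>j. w j = c bt \<or> w j = bt"
  shows "evm m c w t = (if eval2 (\<lambda>j. w j = c bt) t then c bt else bt)"
proof (induction t)
  case (Var j)
  then show ?case using assms by auto
next
  case (Meet t1 t2)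
  then show ?case by (auto simp: idem zero_bt comm[of bt])
next
  case (Cpl t)
  then show ?case by (auto simp: cc)
qed

lemma compl_aux:
  assumes sem: "\<forall>v. eval2 v s = eval2 v t" and fin: "finite F"
  shows "\<forall>w. (\<forall>j. j \<notin> F \<longrightarrow> w j = c bt \<or> w j = bt) \<longrightarrow> evm m c w s = evm m c w t"
  using fin
proof (induction F rule: finite_induct)
  case empty
  then show ?case using sem tv by auto
next
  case (insert i F)
  show ?case
  proof (intro allI impI)
    fix w assume H: "\<forall>j. j \<notin> insert i F \<longrightarrow> w j = c bt \<or> w j = bt"
    have H1: "\<forall>j. j \<notin> F \<longrightarrow> (w(i:=c bt)) j = c bt \<or> (w(i:=c bt)) j = bt" using H by auto
    have H0: "\<forall>j. j \<notin> F \<longrightarrow> (w(i:=bt)) j = c bt \<or> (w(i:=bt)) j = bt" using H by auto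
    have e1: "evm m c (w(i:=c bt)) s = evm m c (w(i:=c bt)) t" using insert.IH H1 by blast
    have e0: "evm m c (w(i:=bt)) s = evm m c (w(i:=bt)) t" using insert.IH H0 by blast
    have "evm m c w s = c (m (c (m (w i) (evm m c w s))) (c (m (c (w i)) (evm m c w s))))"
      by (rule svar)
    also have "\<dots> = c (m (c (m (w i) (evm m c (w(i:=c bt)) s))) (c (m (c (w i)) (evm m c (w(i:=bt)) s))))"
      by (simp only: shan1[of w i s] shan0[of w i s])
    also have "\<dots> = c (m (c (m (w i) (evm m c (w(i:=c bt)) t))) (c (m (c (w i)) (evm m c (w(i:=bt)) t))))"
      by (simp only: e1 e0)
    also have "\<dots> = c (m (c (m (w i) (evm m c w t))) (c (m (c (w i)) (evm m c w t))))"
      by (simp only: shan1[of w i t] shan0[of w i t])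
    also have "\<dots> = evm m c w t" by (rule svar[symmetric])
    finally show "evm m c w s = evm m c w t" .
  qed
qed

lemma completeness:
  assumes sem: "\<forall>v. eval2 v s = eval2 v t"
  shows "evm m c w s = evm m c w t"
proof -
  let ?F = "vs s \<union> vs t"
  define w' where "w' = (\<lambda>j. if j \<in> ?F then w j else c bt)"
  have "evm m c w' s = evm m c w' t"
    using compl_aux[OF sem, of ?F] finite_vs by (auto simp: w'_def)
  moreover have "evm m c w' s = evm m c w s" by (rule evm_cong) (auto simp: w'_def)
  moreover have "evm m c w' t = evm m c w t" by (rule evm_cong) (auto simp: w'_def)
  ultimately show ?thesis by simp
qed

end


abbreviation "S0 \<equiv> {A13, J5'}"

lemma S0_equivp: "equivp (derivable S0)"
  by (rule equivpI)
    (auto simp: reflp_def symp_def transp_def intro: derivable.refl derivable.sym derivable.trans)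

quotient_type qt = bterm / "derivable S0"
  by (rule S0_equivp)

lift_definition qm :: "qt \<Rightarrow> qt \<Rightarrow> qt" is Meet
  by (rule derivable.cong_meet)

lift_definition qc :: "qt \<Rightarrow> qt" is Cpl
  by (rule derivable.cong_cpl)

lemma qt_A13: "qm (qm x y) z = qm (qm y z) x"
proof transfer
  fix x y z :: bterm
  let ?\<sigma> = "(\<lambda>i. if i = 0 then x else if i = 1 then y else z)"
  have "derivable S0 (subst ?\<sigma> (fst A13)) (subst ?\<sigma> (snd A13))"
    by (rule derivable.ax) simp
  then show "derivable S0 (Meet (Meet x y) z) (Meet (Meet y z) x)"
    by (simp add: A13_def)
qed

lemma qt_J: "x = qm (qc (qm (qc x) y)) (qc (qm (qc x) (qc y)))"
proof transfer
  fix x y :: bterm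
  let ?\<sigma> = "(\<lambda>i. if i = 0 then x else y)"
  have "derivable S0 (subst ?\<sigma> (fst J5')) (subst ?\<sigma> (snd J5'))"
    by (rule derivable.ax) simp
  then show "derivable S0 x (Meet (Cpl (Meet (Cpl x) y)) (Cpl (Meet (Cpl x) (Cpl y))))"
    by (simp add: J5'_def)
qed

interpretation Q: hb qm qc
  by unfold_locales (rule qt_A13, rule qt_J)

lemma evm_qt: "evm qm qc (\<lambda>i. abs_qt (Var i)) t = abs_qt t"
  by (induction t) (simp_all add: qm.abs_eq qc.abs_eq)

lemma S0_complete:
  assumes "\<forall>v. eval2 v s = eval2 v t"
  shows "derivable S0 s t"
proof -
  have "evm qm qc (\<lambda>i. abs_qt (Var i)) s = evm qm qc (\<lambda>i. abs_qt (Var i)) t"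
    using Q.completeness[OF assms] .
  then have "abs_qt s = abs_qt t" by (simp add: evm_qt)
  then show ?thesis by (simp add: qt.abs_eq_iff)
qed

lemma A13_ne_J5': "A13 \<noteq> J5'"
  by (simp add: A13_def J5'_def)

theorem theorem9p1:
  shows "is_n_base_BA 2 {A13, J5'}"
proof -
  have sound: "derivable S0 s t \<Longrightarrow> holds_in_BA (s, t)" for s t
  proof -
    assume d: "derivable S0 s t"
    have "evm (\<and>) Not v s = evm (\<and>) Not v t" for v
      by (rule derivable_sound[OF d]) (auto simp: A13_def J5'_def)
    then show ?thesis by (simp add: holds_in_BA_def eval2_evm)
  qed
  have defs: "defines_BA S0"
    unfolding defines_BA_def
  proof (intro allI iffI)
    fix s t assume "derivable S0 s t"
    then show "holds_in_BA (s, t)" by (rule sound)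
  next
    fix s t assume "holds_in_BA (s, t)"
    then have "\<forall>v. eval2 v s = eval2 v t" unfolding holds_in_BA_def by simp
    then show "derivable S0 s t" by (rule S0_complete)
  qed
  have i1: "\<not> derivable {J5'} (fst A13) (snd A13)"
  proof
    assume d: "derivable {J5'} (fst A13) (snd A13)"
    have "evm (\<lambda>x y. x) (\<lambda>x. x) (\<lambda>i. i = 0) (fst A13) = evm (\<lambda>x y. x) (\<lambda>x. x) (\<lambda>i. i = 0) (snd A13)"
      by (rule derivable_sound[OF d]) (auto simp: J5'_def)
    then show False by (simp add: A13_def)
  qed
  have i2: "\<not> derivable {A13} (fst J5') (snd J5')"
  proof
    assume d: "derivable {A13} (fst J5') (snd J5')"
    have "evm (\<lambda>x y. False) (\<lambda>x. x) (\<lambda>i. True) (fst J5') = evm (\<lambda>x y. False) (\<lambda>x. x) (\<lambda>i. True) (snd J5')"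
      by (rule derivable_sound[OF d]) (auto simp: A13_def)
    then show False by (simp add: J5'_def)
  qed
  have "S0 - {A13} = {J5'}" "S0 - {J5'} = {A13}" using A13_ne_J5' by auto
  then have ind: "independent S0"
    unfolding independent_def using i1 i2 by auto
  show ?thesis
    unfolding is_n_base_BA_def using defs ind A13_ne_J5' by simp
qed

end
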